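(* Let $(\tau,\eta)\in\Sigma$ with $\gamma=\mathrm{Re}\,\tau=0$. (i) If $(\tau,\eta)$ is not a point with $\delta=-\dot v\eta\pm\frac{\dot H}{\sqrt{\dot\rho(1+\dot\alpha\dot H^2)}}\eta$, and $\omega_1(\tau,\eta)\in i\mathbb R\setminus\{0\}$, then $\partial_\gamma\omega_1(\tau,\eta)\in\mathbb R\setminus\{0\}$. (ii) If $\omega_2(\tau,\eta)\in i\mathbb R\setminus\{0\}$, then $\partial_\gamma\omega_2(\tau,\eta)\in\mathbb R\setminus\{0\}$.
   Context: Constants of a basic state: $\dot v\neq0$, $\dot\rho>0$, $\dot H\neq0$, $\dot\alpha>0$ with $\dot\alpha\dot H^2\neq1$; $\varepsilon>0$ a parameter. Write $\tau=\gamma+i\delta$, $\Sigma=\{(\tau,\eta)\in\mathbb C\times\mathbb R:|\tau|^2+\eta^2=1,\ \gamma\ge0\}$, $\mu=\tau+i\dot v\eta$. Set \[ \omega_1^2=\eta^2+\frac{\dot\alpha\dot\rho^2\mu^4}{(\mu^2\dot\rho\dot\alpha+\eta^2)\dot H^2+\mu^2\dot\rho},\qquad \omega_2^2=\varepsilon^2\tau^2+\eta^2 . \] For $\gamma>0$, $\omega_1$ and $\omega_2$ denote the square roots with strictly positive real part; they are extended by continuity to $\gamma=0$ (where defined). $\partial_\gamma$ is the partial derivative in $\gamma$ with $\delta,\eta$ fixed. *)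

theory Defs
  imports "HOL-Analysis.Analysis"
begin

definition mu :: "real \<Rightarrow> complex \<Rightarrow> real \<Rightarrow> complex" where
  "mu v tau eta = tau + \<i> * complex_of_real (v * eta)"

definition omega1_sq :: "real \<Rightarrow> real \<Rightarrow> real \<Rightarrow> real \<Rightarrow> complex \<Rightarrow> real \<Rightarrow> complex" where
  "omega1_sq v rho H alpha tau eta =
     complex_of_real (eta^2)
     + complex_of_real (alpha * rho^2) * (mu v tau eta)^4
       / (((mu v tau eta)^2 * complex_of_real (rho * alpha) + complex_of_real (eta^2))
            * complex_of_real (H^2)
          + (mu v tau eta)^2 * complex_of_real rho)"

definition omega2_sq :: "real \<Rightarrow> complex \<Rightarrow> real \<Rightarrow> complex" where
  "omega2_sq eps tau eta = complex_of_real (eps^2) * tau^2 + complex_of_real (eta^2)"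

text \<open>For Re tau > 0 the root is the square root with positive real part (csqrt).
  root_ext f tau eta w: the continuous extension of (tau,eta) |-> csqrt (f tau eta)
  from {Re tau > 0} to the point (tau,eta) exists and equals w.\<close>
definition root_ext :: "(complex \<Rightarrow> real \<Rightarrow> complex) \<Rightarrow> complex \<Rightarrow> real \<Rightarrow> complex \<Rightarrow> bool" where
  "root_ext f tau eta w \<longleftrightarrow>
     ((\<lambda>p. csqrt (f (fst p) (snd p))) \<longlongrightarrow> w) (at (tau, eta) within {p. 0 < Re (fst p)})"

text \<open>gamma_deriv f tau eta w d: at a point with Re tau = 0 where the extended root has
  value w, the partial derivative in gamma (delta, eta fixed) exists and equals d.
  Since the root is only defined for gamma >= 0, this is the derivative within gamma >= 0.\<close>
definition gamma_deriv ::
  "(complex \<Rightarrow> real \<Rightarrow> complex) \<Rightarrow> complex \<Rightarrow> real \<Rightarrow> complex \<Rightarrow> complex \<Rightarrow> bool" where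
  "gamma_deriv f tau eta w d \<longleftrightarrow>
     ((\<lambda>s::real. if s = 0 then w else csqrt (f (tau + complex_of_real s) eta))
        has_vector_derivative d) (at 0 within {0..})"

end

theory Submission
  imports Defs
begin


lemma generic:
  fixes f :: "complex \<Rightarrow> real \<Rightarrow> complex"
  assumes fd: "((\<lambda>z. f z eta) has_field_derivative f') (at tau)"
    and re: "root_ext f tau eta w" and w0: "w \<noteq> 0" and rt: "Re tau = 0"
  shows "f tau eta = w^2 \<and> gamma_deriv f tau eta w (f' / (2*w))"
proof -
  define g where "g s = f (tau + complex_of_real s) eta" for s :: real
  have pd: "((\<lambda>s::real. tau + complex_of_real s) has_vector_derivative 1) (at 0)"
    by (auto intro!: derivative_eq_intros simp: has_vector_derivative_def fun_eq_iff scaleR_conv_of_real)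
  have gd: "(g has_vector_derivative (1 * f')) (at 0)"
    unfolding g_def using field_vector_diff_chain_at[OF pd, of "\<lambda>z. f z eta"] fd
    by (simp add: o_def)
  have gc: "(g \<longlongrightarrow> g 0) (at_right 0)"
    using has_vector_derivative_continuous[OF gd] by (metis isCont_def filterlim_at_split)
  have pl: "filterlim (\<lambda>s::real. (tau + complex_of_real s, eta)) (at (tau, eta) within {p. 0 < Re (fst p)}) (at_right 0)"
  proof (rule filterlim_at_withinI)
    show "((\<lambda>s::real. (tau + complex_of_real s, eta)) \<longlongrightarrow> (tau, eta)) (at_right 0)"
      by (auto intro!: tendsto_eq_intros)
    show "\<forall>\<^sub>F x in at_right 0. (tau + complex_of_real x, eta) \<in> {p. 0 < Re (fst p)} - {(tau, eta)}"
      using rt by (auto simp: eventually_at_right_field intro!: exI[of _ 1])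
  qed
  have L: "((\<lambda>s. csqrt (g s)) \<longlongrightarrow> w) (at_right 0)"
    using filterlim_compose[OF re[unfolded root_ext_def] pl] by (simp add: g_def)
  have "((\<lambda>s. (csqrt (g s))^2) \<longlongrightarrow> w^2) (at_right 0)"
    by (intro tendsto_intros L)
  hence "(g \<longlongrightarrow> w^2) (at_right 0)" by simp
  with gc have g0: "g 0 = w^2" using tendsto_unique[of "at_right (0::real)"] by auto
  hence ft: "f tau eta = w^2" by (simp add: g_def)
  have w2: "w^2 \<noteq> 0" using w0 by simp
  define h where "h s = w * csqrt (g s / w^2)" for s
  have hd0: "((\<lambda>z. w * csqrt (f z eta / w^2)) has_field_derivative (w * (f' / w^2 / (2 * csqrt (f tau eta / w^2))))) (at tau)"
    using ft w2 by (auto intro!: derivative_eq_intros fd simp: field_simps eval_nat_numeral)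
  have hd: "(h has_vector_derivative (1 * (f' / (2*w)))) (at 0)"
  proof -
    have "(h has_vector_derivative (1 * (w * (f' / w^2 / (2 * csqrt (f tau eta / w^2)))))) (at 0)"
      unfolding h_def g_def using field_vector_diff_chain_at[OF pd, of "\<lambda>z. w * csqrt (f z eta / w^2)"] hd0
      by (simp add: o_def)
    moreover have "w * (f' / w^2 / (2 * csqrt (f tau eta / w^2))) = f' / (2*w)"
      using ft w2 w0 by (simp add: field_simps power2_eq_square)
    ultimately show ?thesis by simp
  qed
  have h0: "h 0 = w" using g0 w2 by (simp add: h_def)
  have hc: "(h \<longlongrightarrow> w) (at_right 0)"
    using has_vector_derivative_continuous[OF hd] h0 by (metis isCont_def filterlim_at_split)
  have hsq: "(h s)^2 = g s" for s
    using w2 by (simp add: h_def power_mult_distrib)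
  have ev: "\<forall>\<^sub>F s in at_right 0. csqrt (g s) = h s"
  proof -
    have "\<forall>\<^sub>F s in at_right 0. dist (csqrt (g s)) w < cmod w"
      using L w0 by (auto simp: tendsto_iff)
    moreover have "\<forall>\<^sub>F s in at_right 0. dist (h s) w < cmod w"
      using hc w0 by (auto simp: tendsto_iff)
    ultimately show ?thesis
    proof eventually_elim
      case (elim s)
      have "(csqrt (g s))^2 = (h s)^2" using hsq[of s] by (simp del: power2_csqrt add: power2_csqrt)
      hence "csqrt (g s) = h s \<or> csqrt (g s) = - h s" by (simp only: power2_eq_iff)
      moreover have "csqrt (g s) \<noteq> - h s"
      proof
        assume e: "csqrt (g s) = - h s"
        have "cmod (2*w) \<le> cmod (w + h s) + cmod (w - h s)"
          using norm_triangle_ineq[of "w + h s" "w - h s"] by simp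
        also have "\<dots> < 2 * cmod w" using elim e
          by (simp add: dist_norm norm_minus_commute)
        finally show False by (simp add: norm_mult)
      qed
      ultimately show ?case by blast
    qed
  qed
  then obtain b where b: "b > 0" "\<And>s. 0 < s \<Longrightarrow> s < b \<Longrightarrow> csqrt (g s) = h s"
    by (auto simp: eventually_at_right_field)
  have "gamma_deriv f tau eta w (f' / (2*w))"
    unfolding gamma_deriv_def
  proof (rule has_vector_derivative_transform_within[OF _ b(1)])
    show "(h has_vector_derivative f' / (2 * w)) (at 0 within {0..})"
      using has_vector_derivative_at_within[OF hd] by simp
    show "(0::real) \<in> {0..}" by simp
    fix s :: real assume "s \<in> {0..}" "dist s 0 < b"
    thus "h s = (if s = 0 then w else csqrt (f (tau + complex_of_real s) eta))"
      using b(2)[of s] h0 by (auto simp: g_def)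
  qed
  with ft show ?thesis by simp
qed
lemma Qd:
  fixes A B C :: real and m :: complex
  assumes dn: "of_real B * m^2 + of_real C \<noteq> 0"
  shows "((\<lambda>z. of_real A * z^4 / (of_real B * z^2 + of_real C)) has_field_derivative
     (of_real A * m^3 * (2 * of_real B * m^2 + 4 * of_real C) / (of_real B*m^2 + of_real C)^2)) (at m)"
  apply (rule derivative_eq_intros refl)+
  using dn apply simp
  using dn apply (simp add: field_simps eval_nat_numeral)
  done


lemma part2:
  fixes eps eta :: real and tau w :: complex
  assumes "eps > 0" and rt: "Re tau = 0" and re: "root_ext (omega2_sq eps) tau eta w" "Re w = 0" "w \<noteq> 0"
  shows "\<exists>d. gamma_deriv (omega2_sq eps) tau eta w d \<and> Im d = 0 \<and> d \<noteq> 0"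
proof -
  have fd: "((\<lambda>z. omega2_sq eps z eta) has_field_derivative (of_real(eps^2) * (2*tau))) (at tau)"
    unfolding omega2_sq_def by (auto intro!: derivative_eq_intros)
  from generic[OF fd re(1) re(3) rt] have ft: "omega2_sq eps tau eta = w^2"
    and gd: "gamma_deriv (omega2_sq eps) tau eta w (of_real(eps^2) * (2*tau) / (2*w))" by auto
  define dl where "dl = Im tau"
  define b where "b = Im w"
  have tau: "tau = \<i> * of_real dl" using rt by (simp add: complex_eq_iff dl_def)
  have w: "w = \<i> * of_real b" using re by (simp add: complex_eq_iff b_def)
  have b0: "b \<noteq> 0" using re w by auto
  have "Re (omega2_sq eps tau eta) = Re (w^2)" using ft by simp
  hence e: "eta^2 - (eps^2) * (dl^2) = - (b^2)" by (simp add: omega2_sq_def tau w power2_eq_square)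
  have dl0: "dl \<noteq> 0"
  proof
    assume "dl = 0"
    with e have "eta^2 = - (b^2)" by simp
    moreover have "b^2 > 0" using b0 by simp
    ultimately show False using zero_le_power2[of eta] by linarith
  qed
  have "of_real(eps^2) * (2*tau) / (2*w) = of_real (eps^2 * dl / b)"
    unfolding tau w using b0 by (simp add: field_simps)
  moreover have "eps^2 * dl / b \<noteq> 0" using dl0 b0 \<open>eps > 0\<close> by simp
  ultimately show ?thesis using gd by (intro exI[of _ "of_real (eps^2 * dl / b)"]) auto
qed



lemma part1:
  fixes v rho H alpha eta :: real and tau w :: complex
  assumes "rho > 0" and "H \<noteq> 0" and "alpha > 0" and rt: "Re tau = 0"
    and ex1: "Im tau \<noteq> - v * eta + H / sqrt (rho * (1 + alpha * H^2)) * eta"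
    and ex2: "Im tau \<noteq> - v * eta - H / sqrt (rho * (1 + alpha * H^2)) * eta"
    and re: "root_ext (omega1_sq v rho H alpha) tau eta w" "Re w = 0" "w \<noteq> 0"
  shows "\<exists>d. gamma_deriv (omega1_sq v rho H alpha) tau eta w d \<and> Im d = 0 \<and> d \<noteq> 0"
proof -
  define A where "A = alpha * rho^2"
  define B where "B = rho * (1 + alpha * H^2)"
  define C where "C = eta^2 * H^2"
  define k where "k = Im tau + v * eta"
  define b where "b = Im w"
  define D where "D = C - B * k^2"
  define Q where "Q z = complex_of_real A * z^4 / (of_real B * z^2 + of_real C)" for z :: complex
  have Bp: "B > 0" using assms by (simp add: B_def add_pos_nonneg)
  have Ap: "A > 0" using assms by (simp add: A_def)
  have w: "w = \<i> * of_real b" using re by (simp add: complex_eq_iff b_def)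
  have b0: "b \<noteq> 0" using re w by auto
  have m: "mu v tau eta = \<i> * of_real k"
    using rt by (simp add: complex_eq_iff mu_def k_def)
  have den: "(x * complex_of_real (rho * alpha) + complex_of_real (eta^2)) * complex_of_real (H^2)
          + x * complex_of_real rho = of_real B * x + of_real C" for x
    by (simp add: B_def C_def algebra_simps)
  have om: "omega1_sq v rho H alpha z eta = of_real (eta^2) + Q (mu v z eta)" for z
    unfolding omega1_sq_def Q_def A_def[symmetric] den by simp
  have D0: "D \<noteq> 0"
  proof
    assume "D = 0"
    hence "(k * sqrt B)^2 = (H * eta)^2" using Bp by (simp add: D_def C_def power_mult_distrib algebra_simps)
    hence "k * sqrt B = H * eta \<or> k * sqrt B = - (H * eta)" by (simp add: power2_eq_iff)
    moreover have "sqrt B > 0" using Bp by simp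
    ultimately have "k = H / sqrt B * eta \<or> k = - (H / sqrt B * eta)"
      by (auto simp: field_simps)
    thus False using ex1 ex2 by (auto simp: k_def B_def algebra_simps)
  qed
  have denm: "of_real B * (mu v tau eta)^2 + of_real C = of_real D"
    by (simp add: m D_def power_mult_distrib)
  have Qd': "(Q has_field_derivative
     (of_real A * (mu v tau eta)^3 * (2 * of_real B * (mu v tau eta)^2 + 4 * of_real C) / (of_real B*(mu v tau eta)^2 + of_real C)^2)) (at (mu v tau eta))"
    unfolding Q_def by (rule Qd) (use denm D0 in simp)
  have shd: "((\<lambda>z. mu v z eta) has_field_derivative 1) (at tau)"
    unfolding mu_def by (auto intro!: derivative_eq_intros)
  define f' where "f' = of_real A * (mu v tau eta)^3 * (2 * of_real B * (mu v tau eta)^2 + 4 * of_real C) / (of_real B*(mu v tau eta)^2 + of_real C)^2"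
  have fd: "((\<lambda>z. omega1_sq v rho H alpha z eta) has_field_derivative f') (at tau)"
    unfolding om f'_def
    using DERIV_add[OF DERIV_const DERIV_chain2[OF Qd' shd]] by simp
  from generic[OF fd re(1) re(3) rt] have ft: "omega1_sq v rho H alpha tau eta = w^2"
    and gd: "gamma_deriv (omega1_sq v rho H alpha) tau eta w (f' / (2*w))" by auto
  have "omega1_sq v rho H alpha tau eta = of_real (eta^2 + A * k^4 / D)"
    unfolding om Q_def denm by (simp add: m power_mult_distrib)
  moreover have "w^2 = of_real (-(b^2))" by (simp add: w power_mult_distrib)
  ultimately have e: "eta^2 + A * k^4 / D = - (b^2)"
    using ft of_real_eq_iff by metis
  have bp: "b^2 > 0" using b0 by simp
  have k0: "k \<noteq> 0"
  proof
    assume "k = 0" with e have "eta^2 = - (b^2)" by simp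
    thus False using bp zero_le_power2[of eta] by linarith
  qed
  have E: "4 * C - 2 * B * k^2 \<noteq> 0"
  proof
    assume h: "4 * C - 2 * B * k^2 = 0"
    define x where "x = alpha * H^2"
    have xp: "x \<ge> 0" using assms by (simp add: x_def)
    have Dc: "D = - C" using h by (simp add: D_def)
    have k2: "k^2 = 2 * C / B" using h Bp by (simp add: field_simps)
    have k4: "k^4 = (k^2)^2" by (simp add: eval_nat_numeral)
    have "A * k^4 / D = - (A * (2 * C / B)^2 / C)"
      using Dc k2 k4 by simp
    have C0: "C \<noteq> 0" using k2 k0 by auto
    have r: "A * (2*C/B)^2 / C = eta^2 * (4*x/(1+x)^2)"
    proof -
      have r1: "A*(2*C/B)^2/C = 4*A*C/B^2" using C0 by (simp add: field_simps power2_eq_square)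
      have r2: "4*A*C = rho^2 * (eta^2*(4*x))" by (simp add: A_def C_def x_def algebra_simps power2_eq_square)
      have r3: "B^2 = rho^2 * (1+x)^2" by (simp add: B_def x_def power_mult_distrib)
      have "rho^2 \<noteq> 0" using assms by simp
      hence "rho^2 * (eta^2*(4*x)) / (rho^2 * (1+x)^2) = eta^2*(4*x) / (1+x)^2"
        by (rule mult_divide_mult_cancel_left)
      thus ?thesis using r1 r2 r3 by simp
    qed
    have x1: "(1+x)^2 > 0" using xp by simp
    have "4*x \<le> (1+x)^2" using zero_le_power2[of "1-x"] by (simp add: power2_eq_square algebra_simps)
    hence "4*x/(1+x)^2 \<le> 1" using x1 by simp
    hence "eta^2 * (4*x/(1+x)^2) \<le> eta^2 * 1" by (rule mult_left_mono) simp
    thus False using e \<open>A * k^4 / D = - (A * (2 * C / B)^2 / C)\<close> r bp by linarith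
  qed
  define dr where "dr = - A * k^3 * (4 * C - 2 * B * k^2) / (2 * b * D^2)"
  have m2: "(mu v tau eta)^2 = of_real (-(k^2))" by (simp add: m power_mult_distrib)
  have m3: "(mu v tau eta)^3 = - \<i> * of_real (k^3)" by (simp add: m eval_nat_numeral algebra_simps)
  have f'e: "f' = - \<i> * of_real (A * k^3 * (4 * C - 2 * B * k^2) / D^2)"
    unfolding f'_def denm m3 m2 using D0 by (simp add: field_simps D_def)
  have "f' / (2*w) = of_real dr"
    unfolding f'e w dr_def using D0 b0 by (simp add: field_simps)
  moreover have "dr \<noteq> 0" using Ap k0 E b0 D0 by (simp add: dr_def)
  ultimately show ?thesis using gd by (intro exI[of _ "of_real dr"]) auto
qed
theorem lemma7p2:
  fixes v rho H alpha eps eta :: real and tau :: complex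
  assumes "v \<noteq> 0" and "rho > 0" and "H \<noteq> 0" and "alpha > 0" and "alpha * H^2 \<noteq> 1"
    and "eps > 0"
    and "(cmod tau)^2 + eta^2 = 1" and "Re tau = 0"
  shows "(\<forall>w. Im tau \<noteq> - v * eta + H / sqrt (rho * (1 + alpha * H^2)) * eta
              \<and> Im tau \<noteq> - v * eta - H / sqrt (rho * (1 + alpha * H^2)) * eta
              \<and> root_ext (omega1_sq v rho H alpha) tau eta w \<and> Re w = 0 \<and> w \<noteq> 0
           \<longrightarrow> (\<exists>d. gamma_deriv (omega1_sq v rho H alpha) tau eta w d \<and> Im d = 0 \<and> d \<noteq> 0))
       \<and> (\<forall>w. root_ext (omega2_sq eps) tau eta w \<and> Re w = 0 \<and> w \<noteq> 0
           \<longrightarrow> (\<exists>d. gamma_deriv (omega2_sq eps) tau eta w d \<and> Im d = 0 \<and> d \<noteq> 0))"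
proof (intro conjI allI impI)
  fix w assume h: "Im tau \<noteq> - v * eta + H / sqrt (rho * (1 + alpha * H^2)) * eta
              \<and> Im tau \<noteq> - v * eta - H / sqrt (rho * (1 + alpha * H^2)) * eta
              \<and> root_ext (omega1_sq v rho H alpha) tau eta w \<and> Re w = 0 \<and> w \<noteq> 0"
  show "\<exists>d. gamma_deriv (omega1_sq v rho H alpha) tau eta w d \<and> Im d = 0 \<and> d \<noteq> 0"
    using part1[of rho H alpha tau v eta w] h assms by blast
next
  fix w assume h: "root_ext (omega2_sq eps) tau eta w \<and> Re w = 0 \<and> w \<noteq> 0"
  show "\<exists>d. gamma_deriv (omega2_sq eps) tau eta w d \<and> Im d = 0 \<and> d \<noteq> 0"
    using part2[of eps tau eta w] h assms by blast
qed

end
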